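(* Let $q$ be a prime power, $M\geq2$ an integer with $(M,q)=1$, and $n\geq1$. Let $U_{t+1,n}$ denote the $n\times n$ matrix over $\mathbb{F}_q$ with $-1$ on the diagonal, $1$ on the superdiagonal and $0$ elsewhere. If $\alpha\in\mathrm{GL}(n,q)$ satisfies $\alpha^M=U_{t+1,n}$, then the semisimple part $\alpha_s$ of $\alpha$ (in its Jordan decomposition $\alpha=\alpha_s\alpha_u$) is a scalar matrix. *)

theory Defs
  imports "Jordan_Normal_Form.Matrix" "HOL-Computational_Algebra.Polynomial_Factorial" "HOL-Library.Cardinality"
begin

definition poly_mat :: "'a :: comm_ring_1 poly \<Rightarrow> 'a mat \<Rightarrow> 'a mat" where
  "poly_mat p A = foldr (\<lambda>c B. c \<cdot>\<^sub>m 1\<^sub>m (dim_row A) + A * B) (coeffs p)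
                        (0\<^sub>m (dim_row A) (dim_row A))"

text \<open>Semisimple: annihilated by a nonzero polynomial with distinct roots
  (over an algebraic closure), i.e. a polynomial coprime to its derivative;
  equivalently the minimal polynomial has distinct roots, i.e. the matrix is
  diagonalizable over the algebraic closure.\<close>
definition semisimple_mat :: "'a :: field mat \<Rightarrow> bool" where
  "semisimple_mat A \<longleftrightarrow> (\<exists>p. p \<noteq> 0 \<and> coprime p (pderiv p) \<and>
       poly_mat p A = 0\<^sub>m (dim_row A) (dim_row A))"

definition unipotent_mat :: "'a :: field mat \<Rightarrow> bool" where
  "unipotent_mat A \<longleftrightarrow> (\<exists>k. (A - 1\<^sub>m (dim_row A)) ^\<^sub>m k = 0\<^sub>m (dim_row A) (dim_row A))"

definition U_mat :: "nat \<Rightarrow> 'a :: comm_ring_1 mat" where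
  "U_mat n = mat n n (\<lambda>(i,j). if i = j then -1 else if j = i + 1 then 1 else 0)"

definition scalar_mat :: "'a :: comm_ring_1 mat \<Rightarrow> bool" where
  "scalar_mat A \<longleftrightarrow> (\<exists>c. A = c \<cdot>\<^sub>m 1\<^sub>m (dim_row A))"

end

theory Submission
  imports Defs "Jordan_Normal_Form.Determinant"
begin

lemma poly_mat_carrier: "A \<in> carrier_mat n n \<Longrightarrow> poly_mat p A \<in> carrier_mat n n"
proof -
  assume A: "A \<in> carrier_mat n n"
  have "foldr (\<lambda>c B. c \<cdot>\<^sub>m 1\<^sub>m n + A * B) xs (0\<^sub>m n n) \<in> carrier_mat n n" for xs
    using A by (induction xs) auto
  then show ?thesis unfolding poly_mat_def using A by simp
qed

lemma poly_mat_0[simp]: "A \<in> carrier_mat n n \<Longrightarrow> poly_mat 0 A = 0\<^sub>m n n"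
  unfolding poly_mat_def by auto

lemma poly_mat_pCons: assumes A: "A \<in> carrier_mat n n"
  shows "poly_mat (pCons a p) A = a \<cdot>\<^sub>m 1\<^sub>m n + A * poly_mat p A"
proof (cases "a = 0 \<and> p = 0")
  case True
  then show ?thesis using A by auto
next
  case False
  then have "coeffs (pCons a p) = a # coeffs p"
    by (auto simp: coeffs_pCons_eq_cCons cCons_def)
  then show ?thesis using A unfolding poly_mat_def by simp
qed

lemma poly_mat_add: assumes A: "A \<in> carrier_mat n n"
  shows "poly_mat (p + q) A = poly_mat p A + poly_mat q A"
proof (induction p q rule: poly_induct2)
  case 0
  then show ?case using A by simp
next
  case (pCons a p b q)
  have c1: "poly_mat p A \<in> carrier_mat n n" "poly_mat q A \<in> carrier_mat n n"
    using A by (auto intro: poly_mat_carrier)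
  have "poly_mat (pCons a p + pCons b q) A = (a + b) \<cdot>\<^sub>m 1\<^sub>m n + A * (poly_mat p A + poly_mat q A)"
    by (simp add: poly_mat_pCons[OF A] pCons)
  also have "\<dots> = (a \<cdot>\<^sub>m 1\<^sub>m n + A * poly_mat p A) + (b \<cdot>\<^sub>m 1\<^sub>m n + A * poly_mat q A)"
    using A c1 by (simp add: mult_add_distrib_mat add_smult_distrib_left_mat) (auto simp: assoc_add_mat comm_add_mat)
  finally show ?case by (simp add: poly_mat_pCons[OF A])
qed

lemma poly_mat_smult: assumes A: "A \<in> carrier_mat n n"
  shows "poly_mat (smult c p) A = c \<cdot>\<^sub>m poly_mat p A"
proof (induction p)
  case 0
  then show ?case using A by simp
next
  case (pCons a p)
  have c1: "poly_mat p A \<in> carrier_mat n n" using A by (auto intro: poly_mat_carrier)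
  have s1: "c \<cdot>\<^sub>m (a \<cdot>\<^sub>m 1\<^sub>m n) = (c * a) \<cdot>\<^sub>m (1\<^sub>m n :: 'a mat)"
    by (rule eq_matI) auto
  have s2: "c \<cdot>\<^sub>m (a \<cdot>\<^sub>m 1\<^sub>m n + A * poly_mat p A) = c \<cdot>\<^sub>m (a \<cdot>\<^sub>m 1\<^sub>m n) + c \<cdot>\<^sub>m (A * poly_mat p A)"
    by (rule add_smult_distrib_left_mat) (use A c1 in auto)
  show ?case
    using A c1 by (simp add: poly_mat_pCons[OF A] pCons s2 mult_smult_distrib s1)
qed

lemma poly_mat_linear: assumes A: "A \<in> carrier_mat n n"
  shows "poly_mat ([:-c,1:] * g) A = (A - c \<cdot>\<^sub>m 1\<^sub>m n) * poly_mat g A"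
proof -
  have c1: "poly_mat g A \<in> carrier_mat n n" using A by (auto intro: poly_mat_carrier)
  have eq: "[:-c,1:] * g = smult (-c) g + pCons 0 g" by simp
  have "poly_mat ([:-c,1:] * g) A = (-c) \<cdot>\<^sub>m poly_mat g A + (0 \<cdot>\<^sub>m 1\<^sub>m n + A * poly_mat g A)"
    by (simp only: eq poly_mat_add[OF A] poly_mat_smult[OF A] poly_mat_pCons[OF A])
  also have "\<dots> = (A - c \<cdot>\<^sub>m 1\<^sub>m n) * poly_mat g A"
    using A c1 by (simp add: minus_mult_distrib_mat) (auto simp: comm_add_mat)
  finally show ?thesis .
qed

lemma ut_mult: assumes A: "A \<in> carrier_mat n n" and B: "B \<in> carrier_mat n n"
  and uA: "upper_triangular A" and uB: "upper_triangular B"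
  shows "upper_triangular (A * B)" "\<And>i. i < n \<Longrightarrow> (A * B) $$ (i,i) = A $$ (i,i) * B $$ (i,i)"
proof -
  have e: "(A * B) $$ (i,j) = (\<Sum>k\<in>{0..<n}. A $$ (i,k) * B $$ (k,j))" if "i < n" "j < n" for i j
    using A B that by (simp add: scalar_prod_def)
  show "upper_triangular (A * B)"
  proof
    fix i j assume ji: "j < i" and i: "i < dim_row (A * B)"
    then have i': "i < n" using A by simp
    have "(\<Sum>k\<in>{0..<n}. A $$ (i,k) * B $$ (k,j)) = 0"
    proof (rule sum.neutral, intro ballI)
      fix k assume k: "k \<in> {0..<n}"
      show "A $$ (i,k) * B $$ (k,j) = 0"
      proof (cases "k < i")
        case True then show ?thesis using upper_triangularD[OF uA True] i' A by simp
      next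
        case False
        then have "j < k" using ji by simp
        then show ?thesis using upper_triangularD[OF uB \<open>j < k\<close>] k B by simp
      qed
    qed
    then show "(A * B) $$ (i,j) = 0" using e[OF i'] ji i' by simp
  qed
  fix i assume i: "i < n"
  have "(\<Sum>k\<in>{0..<n}. A $$ (i,k) * B $$ (k,i)) = (\<Sum>k\<in>{0..<n}. if k = i then A $$ (i,i) * B $$ (i,i) else 0)"
  proof (rule sum.cong[OF refl])
    fix k assume k: "k \<in> {0..<n}"
    show "A $$ (i,k) * B $$ (k,i) = (if k = i then A $$ (i,i) * B $$ (i,i) else 0)"
    proof (cases "k < i")
      case True then show ?thesis using upper_triangularD[OF uA True] i A by simp
    next
      case False
      show ?thesis
      proof (cases "k = i")
        case False
        then have "i < k" using \<open>\<not> k < i\<close> by simp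
        then show ?thesis using upper_triangularD[OF uB \<open>i < k\<close>] k B False by simp
      qed simp
    qed
  qed
  then show "(A * B) $$ (i,i) = A $$ (i,i) * B $$ (i,i)" using e[OF i i] i by simp
qed

lemma poly_mat_ut: assumes A: "A \<in> carrier_mat n n" and uA: "upper_triangular A"
  and d: "\<And>i. i < n \<Longrightarrow> A $$ (i,i) = c"
  shows "upper_triangular (poly_mat g A) \<and> (\<forall>i<n. poly_mat g A $$ (i,i) = poly g c)"
proof (induction g)
  case 0
  then show ?case using A by auto
next
  case (pCons a p)
  have c1: "poly_mat p A \<in> carrier_mat n n" using A by (auto intro: poly_mat_carrier)
  have u: "upper_triangular (A * poly_mat p A)" using ut_mult(1)[OF A c1 uA] pCons by blast
  have dd: "(A * poly_mat p A) $$ (i,i) = c * poly p c" if "i < n" for i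
    using ut_mult(2)[OF A c1 uA, of i] pCons d that by auto
  have cm: "A * poly_mat p A \<in> carrier_mat n n" using A c1 by auto
  show ?case
  proof
    show "upper_triangular (poly_mat (pCons a p) A)"
      unfolding poly_mat_pCons[OF A]
    proof
      fix i j assume "j < i" "i < dim_row (a \<cdot>\<^sub>m 1\<^sub>m n + A * poly_mat p A)"
      then show "(a \<cdot>\<^sub>m 1\<^sub>m n + A * poly_mat p A) $$ (i, j) = 0"
        using u cm A upper_triangularD[OF u \<open>j < i\<close>] by auto
    qed
    show "\<forall>i<n. poly_mat (pCons a p) A $$ (i, i) = poly (pCons a p) c"
      unfolding poly_mat_pCons[OF A] using dd cm carrier_matD[OF cm] by auto
  qed
qed

lemma root_split: fixes p :: "'a :: field poly"
  assumes "p \<noteq> 0" "coprime p (pderiv p)" "poly p c = 0"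
  shows "\<exists>g. p = [:-c,1:] * g \<and> poly g c \<noteq> 0"
proof -
  from assms(3) obtain g where g: "p = [:-c,1:] * g"
    by (metis dvdE poly_eq_0_iff_dvd)
  have "poly g c \<noteq> 0"
  proof
    assume "poly g c = 0"
    then have d1: "[:-c,1:] dvd g" by (simp add: poly_eq_0_iff_dvd)
    have "pderiv p = [:-c,1:] * pderiv g + g * pderiv [:-c,1:]" by (simp only: g pderiv_mult)
    moreover have "pderiv [:-c,1:] = 1" by (simp add: pderiv_pCons)
    ultimately have "pderiv p = [:-c,1:] * pderiv g + g" by simp
    then have "[:-c,1:] dvd pderiv p" using d1 by (metis dvd_add dvd_triv_left)
    moreover have "[:-c,1:] dvd p" unfolding g by (rule dvd_triv_left)
    ultimately have "is_unit [:-c,1:]" using assms(2) coprime_common_divisor by blast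
    then show False by (simp add: is_unit_iff_degree)
  qed
  then show ?thesis using g by blast
qed

lemma pow_commute: assumes A: "A \<in> carrier_mat n n" and B: "B \<in> carrier_mat n n"
  and c: "A * B = B * A"
  shows "A * B ^\<^sub>m k = B ^\<^sub>m k * A"
proof (induction k)
  case 0
  then show ?case using A B by simp
next
  case (Suc k)
  have Bk: "B ^\<^sub>m k \<in> carrier_mat n n" using B by simp
  have "A * B ^\<^sub>m Suc k = (A * B ^\<^sub>m k) * B"
    using A B Bk by (simp add: assoc_mult_mat[of A n n _ n B n])
  also have "\<dots> = B ^\<^sub>m k * (A * B)"
    using A B Bk Suc by (simp add: assoc_mult_mat[of _ n n A n B n])
  also have "\<dots> = (B ^\<^sub>m k * B) * A"
    using A B Bk c by (simp add: assoc_mult_mat[of _ n n B n A n])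
  finally show ?case by simp
qed

lemma sU_entry: fixes s :: "'a :: comm_ring_1 mat"
  assumes s: "s \<in> carrier_mat n n" and i: "i < n" and j: "j < n"
  shows "(s * U_mat n) $$ (i,j) = - s $$ (i,j) + (if 0 < j then s $$ (i, j - 1) else 0)"
proof -
  have "(s * U_mat n) $$ (i,j) = (\<Sum>k\<in>{0..<n}. s $$ (i,k) * (if k = j then -1 else if j = k + 1 then 1 else 0))"
    using s i j by (simp add: U_mat_def scalar_prod_def)
  also have "\<dots> = (\<Sum>k\<in>{0..<n}. (if k = j then - s $$ (i,j) else 0) + (if k = j - 1 \<and> 0 < j then s $$ (i, j - 1) else 0))"
    by (rule sum.cong) auto
  also have "\<dots> = - s $$ (i,j) + (if 0 < j then s $$ (i, j - 1) else 0)"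
    using j by (simp add: sum.distrib sum.delta)
  finally show ?thesis .
qed

lemma Us_entry: fixes s :: "'a :: comm_ring_1 mat"
  assumes s: "s \<in> carrier_mat n n" and i: "i < n" and j: "j < n"
  shows "(U_mat n * s) $$ (i,j) = - s $$ (i,j) + (if i + 1 < n then s $$ (i + 1, j) else 0)"
proof -
  have "(U_mat n * s) $$ (i,j) = (\<Sum>k\<in>{0..<n}. (if i = k then -1 else if k = i + 1 then 1 else 0) * s $$ (k,j))"
    using s i j by (simp add: U_mat_def scalar_prod_def)
  also have "\<dots> = (\<Sum>k\<in>{0..<n}. (if k = i then - s $$ (i,j) else 0) + (if k = i + 1 then s $$ (i + 1, j) else 0))"
    by (rule sum.cong) auto
  also have "\<dots> = - s $$ (i,j) + (if i + 1 < n then s $$ (i + 1, j) else 0)"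
    using i by (simp add: sum.distrib sum.delta)
  finally show ?thesis .
qed

theorem lemma7p2:
  fixes \<alpha> :: "'a :: {finite, field} mat" and s u :: "'a mat" and M n :: nat
  assumes "M \<ge> 2" and "coprime M CARD('a)" and "n \<ge> 1"
    and "\<alpha> \<in> carrier_mat n n" and "invertible_mat \<alpha>"
    and "\<alpha> ^\<^sub>m M = U_mat n"
    and "s \<in> carrier_mat n n" and "u \<in> carrier_mat n n"
    and "\<alpha> = s * u" and "s * u = u * s"
    and "semisimple_mat s" and "unipotent_mat u"
  shows "scalar_mat s"
proof -
  note sC = assms(7) and uC = assms(8) and aC = assms(4)
  have c1: "s * \<alpha> = \<alpha> * s"
  proof -
    have "\<alpha> * s = s * (u * s)" using assms(9) sC uC by (simp add: assoc_mult_mat[of s n n u n s n])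
    also have "\<dots> = s * \<alpha>" using assms(9,10) by simp
    finally show ?thesis by simp
  qed
  have cU: "s * U_mat n = U_mat n * s"
    using pow_commute[OF sC aC c1, of M] assms(6) by simp
  let ?c = "s $$ (0,0)"
  have E: "(if 0 < j then s $$ (i, j - 1) else 0) = (if i + 1 < n then s $$ (i + 1, j) else 0)"
    if "i < n" "j < n" for i j
    using arg_cong[OF cU, of "\<lambda>X. X $$ (i,j)"] sU_entry[OF sC that] Us_entry[OF sC that] by simp
  have low: "\<forall>a. b < a \<longrightarrow> a < n \<longrightarrow> s $$ (a,b) = 0" for b
  proof (induction b)
    case 0
    show ?case
    proof (intro allI impI)
      fix a assume "0 < a" "a < n"
      then show "s $$ (a,0) = 0" using E[of "a - 1" 0] by simp
    qed
  next
    case (Suc b)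
    show ?case
    proof (intro allI impI)
      fix a assume a: "Suc b < a" "a < n"
      then have "s $$ (a - 1, b) = s $$ (a, Suc b)" using E[of "a - 1" "Suc b"] by simp
      then show "s $$ (a, Suc b) = 0" using Suc a by simp
    qed
  qed
  have diag: "a < n \<longrightarrow> s $$ (a,a) = ?c" for a
  proof (induction a)
    case 0 then show ?case by simp
  next
    case (Suc a)
    then show ?case using E[of a "Suc a"] by auto
  qed
  have ut: "upper_triangular s"
    using low sC by (auto intro!: upper_triangularI)
  have dg: "\<And>i. i < n \<Longrightarrow> s $$ (i,i) = ?c" using diag by blast
  from assms(11) obtain p where p: "p \<noteq> 0" "coprime p (pderiv p)"
    "poly_mat p s = 0\<^sub>m n n" unfolding semisimple_mat_def using sC by auto
  have n0: "0 < n" using assms(3) by simp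
  show ?thesis
  proof (cases "poly p ?c = 0")
    case False
    have "poly_mat p s $$ (0,0) = poly p ?c" using poly_mat_ut[OF sC ut dg, of p] n0 by blast
    then show ?thesis using False p(3) n0 by simp
  next
    case True
    obtain g where g: "p = [:-?c,1:] * g" "poly g ?c \<noteq> 0" using root_split[OF p(1,2) True] by blast
    let ?G = "poly_mat g s"
    have GC: "?G \<in> carrier_mat n n" using sC by (rule poly_mat_carrier)
    have Gu: "upper_triangular ?G" and Gd: "\<forall>i<n. ?G $$ (i,i) = poly g ?c"
      using poly_mat_ut[OF sC ut dg, of g] by auto
    have "det ?G = prod_list (diag_mat ?G)" by (rule det_upper_triangular[OF Gu GC])
    also have "\<dots> \<noteq> 0" using Gd GC g(2) by (auto simp: diag_mat_def prod_list_zero_iff)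
    finally have "det ?G \<noteq> 0" .
    from det_non_zero_imp_unit[OF GC this, of undefined]
    obtain B where B: "B \<in> carrier_mat n n" "?G * B = 1\<^sub>m n"
      unfolding Units_def ring_mat_def by auto
    let ?T = "s - ?c \<cdot>\<^sub>m 1\<^sub>m n"
    have TC: "?T \<in> carrier_mat n n" using sC by (intro minus_carrier_mat) auto
    have TG: "?T * ?G = 0\<^sub>m n n" using p(3) poly_mat_linear[OF sC, of ?c g] g(1) by simp
    have "?T = ?T * (?G * B)" using B TC by simp
    also have "\<dots> = (?T * ?G) * B" using TC GC B by (simp add: assoc_mult_mat[of _ n n _ n B n])
    also have "\<dots> = 0\<^sub>m n n" using TG B by simp
    finally have T0: "?T = 0\<^sub>m n n" .
    have "s = ?c \<cdot>\<^sub>m 1\<^sub>m n"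
    proof (rule eq_matI)
      fix i j assume "i < dim_row (?c \<cdot>\<^sub>m 1\<^sub>m n)" "j < dim_col (?c \<cdot>\<^sub>m (1\<^sub>m n :: 'a mat))"
      then have ij: "i < n" "j < n" by auto
      have "?T $$ (i,j) = 0" using T0 ij by simp
      then show "s $$ (i,j) = (?c \<cdot>\<^sub>m 1\<^sub>m n) $$ (i,j)" using ij sC by simp
    qed (use sC in auto)
    then show ?thesis unfolding scalar_mat_def using sC by auto
  qed
qed

end
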